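(* Let $\alpha$ be a countable ordinal and $S$ a sierpinskisation of $\alpha$ and $\omega$. Then $[\omega]^{<\omega}$ is not embeddable (as a poset) in $I_{<\omega}(S)$.
   Context: A sierpinskisation of a countable order type $\alpha$ and $\omega$ is a poset $(S,\le)$ whose order is the intersection of two linear orders on $S$, one of type $\alpha$ and one of type $\omega$. $I_{<\omega}(S)$ is the set of finitely generated initial segments of $S$ ordered by inclusion. $[\omega]^{<\omega}$ is the set of finite subsets of $\mathbb{N}$ ordered by inclusion. *)

theory Defs
  imports Main "HOL-Library.Countable_Set"
begin

(* Ordinals are represented as well-order relations; order type equality is ordIso.
   A sierpinskisation of alpha and omega: a poset (S, P) where P is the intersection
   of two linear orders on S, one isomorphic to alpha and one isomorphic to omega (natLeq).
   (A linear order isomorphic to a well-order is itself a well-order.) *)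
definition sierpinskisation :: "'b rel \<Rightarrow> 'a set \<Rightarrow> 'a rel \<Rightarrow> bool" where
  "sierpinskisation \<alpha> S P \<longleftrightarrow>
     (\<exists>r1 r2. Well_order r1 \<and> Field r1 = S \<and> (r1, \<alpha>) \<in> ordIso \<and>
              Well_order r2 \<and> Field r2 = S \<and> (r2, natLeq) \<in> ordIso \<and>
              P = r1 \<inter> r2)"

definition down_closure :: "'a rel \<Rightarrow> 'a set \<Rightarrow> 'a set" where
  "down_closure P F = {x. \<exists>y\<in>F. (x, y) \<in> P}"

definition fin_gen_initial_segments :: "'a set \<Rightarrow> 'a rel \<Rightarrow> 'a set set" where
  "fin_gen_initial_segments S P = {down_closure P F | F. finite F \<and> F \<subseteq> S}"

end

theory Submission
  imports Defs
begin

lemma pred_finite: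
  assumes "(r2, natLeq) \<in> ordIso"
  shows "finite {y. (y,x) \<in> r2}"
proof -
  obtain h where iso: "iso r2 natLeq h" using assms unfolding ordIso_def by auto
  have bij: "bij_betw h (Field r2) (Field natLeq)"
    and ord: "\<forall>a \<in> Field r2. \<forall>b \<in> Field r2. (a, b) \<in> r2 \<longleftrightarrow> (h a, h b) \<in> natLeq"
    using iso unfolding iso_iff2 by auto
  show ?thesis
  proof (cases "x \<in> Field r2")
    case False
    hence "{y. (y,x) \<in> r2} = {}" by (auto simp: Field_def)
    thus ?thesis by simp
  next
    case True
    have sub: "{y. (y,x) \<in> r2} \<subseteq> Field r2" by (auto simp: Field_def)
    have inj: "inj_on h {y. (y,x) \<in> r2}" using bij sub
      by (meson bij_betw_def inj_on_subset)
    have "h ` {y. (y,x) \<in> r2} \<subseteq> {..h x}"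
      proof
      fix z assume "z \<in> h ` {y. (y,x) \<in> r2}"
      then obtain y where y: "(y,x) \<in> r2" "z = h y" by blast
      have "y \<in> Field r2" using y by (auto simp: Field_def)
      hence "(h y, h x) \<in> natLeq" using ord True y by blast
      thus "z \<in> {..h x}" using y by (simp add: natLeq_def)
    qed
    hence "finite (h ` {y. (y,x) \<in> r2})" using finite_subset by blast
    thus ?thesis using inj finite_imageD by blast
  qed
qed


lemma no_bad:
  fixes g :: "nat \<Rightarrow> 'a"
  assumes "sierpinskisation \<alpha> S P"
    and gS: "\<And>n. g n \<in> S"
    and bad: "\<And>n m. n \<noteq> m \<Longrightarrow> (g n, g m) \<notin> P"
  shows False
proof -
  obtain r1 r2 where r1: "Well_order r1" "Field r1 = S"
    and r2: "Well_order r2" "Field r2 = S" "(r2, natLeq) \<in> ordIso"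
    and P: "P = r1 \<inter> r2"
    using assms(1) unfolding sierpinskisation_def by blast
  have refl1: "\<And>x. x \<in> S \<Longrightarrow> (x,x) \<in> r1" using wo_rel.REFL[of r1] r1
    unfolding wo_rel_def refl_on_def by blast
  have refl2: "\<And>x. x \<in> S \<Longrightarrow> (x,x) \<in> r2" using wo_rel.REFL[of r2] r2
    unfolding wo_rel_def refl_on_def by blast
  have "inj g"
  proof (rule injI, rule ccontr)
    fix n m assume "g n = g m" "n \<noteq> m"
    thus False using bad[of n m] refl1 refl2 gS P by auto
  qed
  hence infX: "infinite (range g)" using finite_imageD[of g UNIV] infinite_UNIV_nat by blast
  define x0 where "x0 = wo_rel.minim r1 (range g)"
  have wo1: "wo_rel r1" using r1 by (simp add: wo_rel_def)
  have sub: "range g \<subseteq> Field r1" using gS r1 by auto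
  have x0in: "x0 \<in> range g" unfolding x0_def using wo_rel.minim_in[OF wo1 sub] by blast
  have x0le: "\<And>y. y \<in> range g \<Longrightarrow> (x0, y) \<in> r1"
    unfolding x0_def using wo_rel.minim_least[OF wo1 sub] by blast
  have fin: "finite (insert x0 {y. (y,x0) \<in> r2})"
    using pred_finite[OF r2(3), of x0] by simp
  have "infinite (range g - insert x0 {y. (y,x0) \<in> r2})"
    by (rule Diff_infinite_finite[OF fin infX])
  hence "range g - insert x0 {y. (y,x0) \<in> r2} \<noteq> {}" by (metis finite.emptyI)
  then obtain y where "y \<in> range g - insert x0 {y. (y,x0) \<in> r2}" by blast
  hence y: "y \<in> range g" "y \<noteq> x0" "(y,x0) \<notin> r2" by auto
  have tot: "total_on S r2" using wo_rel.TOTAL[of r2] r2 unfolding wo_rel_def by simp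
  have x0S: "x0 \<in> S" using x0in gS by blast
  have yS: "y \<in> S" using y(1) gS by blast
  have "(x0, y) \<in> r2 \<or> (y, x0) \<in> r2"
    using tot x0S yS y(2) unfolding total_on_def by metis
  hence "(x0, y) \<in> r2" using y(3) by blast
  moreover have "(x0, y) \<in> r1" using x0le y(1) by blast
  ultimately have xyP: "(x0,y) \<in> P" using P by blast
  obtain n where n: "x0 = g n" using x0in by blast
  obtain m where m: "y = g m" using y(1) by blast
  have "n \<noteq> m" using n m y(2) by blast
  from bad[OF this] xyP n m show False by simp
qed

theorem lemma2p2:
  fixes \<alpha> :: "'b rel" and S :: "'a set" and P :: "'a rel"
  assumes "Well_order \<alpha>" and "countable (Field \<alpha>)"
    and "sierpinskisation \<alpha> S P"
  shows "\<not> (\<exists>f :: nat set \<Rightarrow> 'a set.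
             (\<forall>A. finite A \<longrightarrow> f A \<in> fin_gen_initial_segments S P) \<and>
             (\<forall>A B. finite A \<longrightarrow> finite B \<longrightarrow> (A \<subseteq> B \<longleftrightarrow> f A \<subseteq> f B)))"
proof
  assume "\<exists>f :: nat set \<Rightarrow> 'a set.
             (\<forall>A. finite A \<longrightarrow> f A \<in> fin_gen_initial_segments S P) \<and>
             (\<forall>A B. finite A \<longrightarrow> finite B \<longrightarrow> (A \<subseteq> B \<longleftrightarrow> f A \<subseteq> f B))"
  then obtain f :: "nat set \<Rightarrow> 'a set" where
    fI: "\<And>A. finite A \<Longrightarrow> f A \<in> fin_gen_initial_segments S P"
    and emb: "\<And>A B. finite A \<Longrightarrow> finite B \<Longrightarrow> (A \<subseteq> B \<longleftrightarrow> f A \<subseteq> f B)" by blast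
  obtain r1 r2 where r1: "Well_order r1" "Field r1 = S"
    and r2: "Well_order r2" "Field r2 = S"
    and P: "P = r1 \<inter> r2"
    using assms(3) unfolding sierpinskisation_def by blast
  have "trans r1" "trans r2" using wo_rel.TRANS[of r1] wo_rel.TRANS[of r2] r1 r2 unfolding wo_rel_def by simp_all
  hence trP: "trans P" using P trans_Int by blast
  have refl1: "\<And>x. x \<in> S \<Longrightarrow> (x,x) \<in> r1" using wo_rel.REFL[of r1] r1
    unfolding wo_rel_def refl_on_def by blast
  have refl2: "\<And>x. x \<in> S \<Longrightarrow> (x,x) \<in> r2" using wo_rel.REFL[of r2] r2
    unfolding wo_rel_def refl_on_def by blast
  have reflP: "\<And>x. x \<in> S \<Longrightarrow> (x,x) \<in> P" using refl1 refl2 P by blast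
  have "\<forall>n. \<exists>F. f {n} = down_closure P F \<and> finite F \<and> F \<subseteq> S"
    using fI unfolding fin_gen_initial_segments_def by blast
  then obtain F where F: "\<And>n. f {n} = down_closure P (F n)" "\<And>n. finite (F n)" "\<And>n. F n \<subseteq> S"
    by metis
  have key: "\<exists>y\<in>F n. \<forall>m. m \<noteq> n \<longrightarrow> y \<notin> f {m}" for n
  proof (rule ccontr)
    assume "\<not> ?thesis"
    hence "\<forall>y\<in>F n. \<exists>m. m \<noteq> n \<and> y \<in> f {m}" by blast
    then obtain mm where mm: "\<And>y. y \<in> F n \<Longrightarrow> mm y \<noteq> n \<and> y \<in> f {mm y}" by metis
    define B where "B = mm ` F n"
    have finB: "finite B" using F(2) B_def by simp
    obtain G where G: "f B = down_closure P G" using fI[OF finB]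
      unfolding fin_gen_initial_segments_def by blast
    have "F n \<subseteq> f B"
    proof
      fix y assume y: "y \<in> F n"
      have "{mm y} \<subseteq> B" using y B_def by auto
      hence "f {mm y} \<subseteq> f B" using emb[of "{mm y}" B] finB by simp
      thus "y \<in> f B" using mm y by blast
    qed
    hence FB: "\<And>y. y \<in> F n \<Longrightarrow> \<exists>z\<in>G. (y,z) \<in> P" unfolding G down_closure_def by blast
    have "f {n} \<subseteq> f B"
    proof
      fix x assume "x \<in> f {n}"
      then obtain y where y: "y \<in> F n" "(x,y) \<in> P" unfolding F(1) down_closure_def by blast
      obtain z where z: "z \<in> G" "(y,z) \<in> P" using FB[OF y(1)] by blast
      have "(x,z) \<in> P" using trP y(2) z(2) by (rule transD)
      thus "x \<in> f B" unfolding G down_closure_def using z(1) by blast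
    qed
    hence "{n} \<subseteq> B" using emb[of "{n}" B] finB by simp
    thus False using mm B_def by auto
  qed
  then obtain g where g: "\<And>n. g n \<in> F n" "\<And>n m. m \<noteq> n \<Longrightarrow> g n \<notin> f {m}" by metis
  show False
  proof (rule no_bad[OF assms(3), of g])
    show "g n \<in> S" for n using g(1)[of n] F(3)[of n] by blast
    show "(g n, g m) \<notin> P" if "n \<noteq> m" for n m
    proof
      assume "(g n, g m) \<in> P"
      hence "g n \<in> f {m}" using g(1)[of m] unfolding F(1)[of m] down_closure_def by blast
      thus False using g(2)[of m n] that by simp
    qed
  qed
qed

end
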